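(* Assume $\epsilon\in(0,1/3)$, $p\ge2$, $\nu>0$, $T\ge 4\max\{\log\frac1{1-\epsilon},\log p\}$, and the inlier stability condition. Let $\delta_T=4\nu\big(\sqrt{\log(1/(1-\epsilon))/T}+\sqrt{\log p/T}\big)$. Let $\hat\mu^{[1]}\in\operatorname{conv}\{g_1,\dots,g_N\}$ and, for $s\ge1$, let $\bar w^{[s]}\in\Delta_{N,\epsilon}$ satisfy $\gamma(\bar w^{[s]};\hat\mu^{[s]})\le\mathrm{OPT}(\hat\mu^{[s]})+\delta_T$ (this holds when $\bar w^{[s]}$ is the output of the MW–MMW rounds with center $\hat\mu^{[s]}$, uniform initialization, $\eta_w=\frac1\nu\sqrt{\log(1/(1-\epsilon))/T}$, $\eta_\rho=\frac1\nu\sqrt{\log p/T}$), and set $\hat\mu^{[s+1]}=\sum_{n=1}^N\bar w^{[s]}_ng_n$. Let $e^{[s]}=\|\hat\mu^{[s]}-\mu_g\|_2$ and $\alpha_\epsilon=\sqrt{\epsilon/(1-2\epsilon)}$. Then for all $s\ge1$, $$e^{[s+1]}\le\alpha_\epsilon e^{[s]}+R_{\epsilon,T},\qquad R_{\epsilon,T}=(1+\alpha_\epsilon)\delta_\mu+\alpha_\epsilon\sqrt{\|\Sigma_g\|_{op}+\delta_\Sigma+\delta_T}.$$ Consequently $e^{[s]}\le\alpha_\epsilon^{s-1}e^{[1]}+\frac{1-\alpha_\epsilon^{s-1}}{1-\alpha_\epsilon}R_{\epsilon,T}$ for all $s\ge1$, and $\limsup_{s\to\infty}e^{[s]}\le 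R_\infty:=\frac{R_{\epsilon,T}}{1-\alpha_\epsilon}$.
   Context: Fix $N\ge1$, $p\ge1$, $\epsilon\in[0,1)$ and vectors $g_1,\dots,g_N\in\mathbb R^p$; $\nu=\max_{i,j}\|g_i-g_j\|_2^2$. For an index set $I$ and $\epsilon'\in[0,1)$, $\Delta_{I,\epsilon'}=\{w\in\mathbb R^{I}:\sum_{n\in I}w_n=1,\ 0\le w_n\le\frac1{(1-\epsilon')|I|}\}$, and $\Delta_{N,\epsilon}=\Delta_{[N],\epsilon}$. Density matrices $\mathfrak D_p=\{\rho\succeq0\text{ symmetric},\mathrm{Tr}\,\rho=1\}$, $\langle A,B\rangle=\mathrm{Tr}(A^\top B)$. For $\hat\mu\in\mathbb R^p$: $S(w;\hat\mu)=\sum_n w_n(g_n-\hat\mu)(g_n-\hat\mu)^\top$, $\gamma(w;\hat\mu)=\|S(w;\hat\mu)\|_{op}$, $\mathrm{OPT}(\hat\mu)=\min_{w\in\Delta_{N,\epsilon}}\max_{\rho\in\mathfrak D_p}\langle S(w;\hat\mu),\rho\rangle$. MW–MMW rounds for center $\hat\mu$: $z_n=g_n-\hat\mu$, $w^{(1)}=(1/N,\dots,1/N)$; for $t=1,\dots,T$: $S^{(t)}=\sum_nw^{(t)}_nz_nz_n^\top$, $\rho^{(t)}=\exp(\eta_\rho\sum_{t'\le t}S^{(t')})/\mathrm{Tr}\exp(\eta_\rho\sum_{t'\le t}S^{(t')})$, $m^{(t)}_n=z_n^\top\rho^{(t)}z_n$, $\tilde w^{(t)}_n=w^{(t)}_n(1-\eta_wm^{(t)}_n)$,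 $w^{(t+1)}=\arg\min_{w\in\Delta_{N,\epsilon}}\sum_nw_n\log(w_n/\tilde w^{(t)}_n)$; output $\bar w=\frac1T\sum_tw^{(t)}$. Inlier stability condition: there is a partition $[N]=I_{in}\sqcup I_{out}$ with $|I_{out}|\le\epsilon N$, a vector $\mu_g\in\mathbb R^p$, a symmetric PSD $\Sigma_g$ and constants $\delta_\mu,\delta_\Sigma\ge0$ such that for every $w\in\Delta_{I_{in},\epsilon/(1-\epsilon)}$: $\|\sum_{n\in I_{in}}w_n(g_n-\mu_g)\|_2\le\delta_\mu$ and $\sum_{n\in I_{in}}w_n(g_n-\mu_g)(g_n-\mu_g)^\top\preceq\Sigma_g+\delta_\Sigma I_p$. *)

theory Defs
  imports "HOL-Analysis.Analysis"
begin


definition outer :: "real^('p::finite) \<Rightarrow> real^('p::finite) \<Rightarrow> real^('p::finite)^'p" where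
  "outer u v = (\<chi> i j. u $ i * v $ j)"

definition psd :: "real^('p::finite)^'p \<Rightarrow> bool" where
  "psd A \<longleftrightarrow> (\<forall>x. 0 \<le> x \<bullet> (A *v x))"

definition symmetric_mat :: "real^('p::finite)^'p \<Rightarrow> bool" where
  "symmetric_mat A \<longleftrightarrow> transpose A = A"

definition loewner_le :: "real^('p::finite)^'p \<Rightarrow> real^('p::finite)^'p \<Rightarrow> bool" where
  "loewner_le A B \<longleftrightarrow> psd (B - A)"

definition op_norm :: "real^('p::finite)^'p \<Rightarrow> real" where
  "op_norm A = onorm (\<lambda>x. A *v x)"

definition frob :: "real^('p::finite)^'p \<Rightarrow> real^('p::finite)^'p \<Rightarrow> real" where
  "frob A B = trace (transpose A ** B)"

definition density_matrices :: "(real^('p::finite)^'p) set" where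
  "density_matrices = {\<rho>. symmetric_mat \<rho> \<and> psd \<rho> \<and> trace \<rho> = 1}"

(* capped simplex \<Delta>_{I,eps'} ; weights are functions nat => real, only values on I matter *)
definition capped_simplex :: "nat set \<Rightarrow> real \<Rightarrow> (nat \<Rightarrow> real) set" where
  "capped_simplex I eps' = {w. (\<Sum>n\<in>I. w n) = 1 \<and>
      (\<forall>n\<in>I. 0 \<le> w n \<and> w n \<le> 1 / ((1 - eps') * real (card I)))}"

definition Smat :: "nat \<Rightarrow> (nat \<Rightarrow> real^('p::finite)) \<Rightarrow> (nat \<Rightarrow> real) \<Rightarrow> real^('p::finite) \<Rightarrow> real^('p::finite)^'p" where
  "Smat N g w mu = (\<Sum>n<N. w n *\<^sub>R outer (g n - mu) (g n - mu))"

definition gamma :: "nat \<Rightarrow> (nat \<Rightarrow> real^('p::finite)) \<Rightarrow> (nat \<Rightarrow> real) \<Rightarrow> real^('p::finite) \<Rightarrow> real" where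
  "gamma N g w mu = op_norm (Smat N g w mu)"

definition OPT :: "nat \<Rightarrow> real \<Rightarrow> (nat \<Rightarrow> real^('p::finite)) \<Rightarrow> real^('p::finite) \<Rightarrow> real" where
  "OPT N eps g mu = Inf ((\<lambda>w. Sup ((\<lambda>\<rho>. frob (Smat N g w mu) \<rho>) ` density_matrices))
                         ` capped_simplex {..<N} eps)"

definition nu_diam :: "nat \<Rightarrow> (nat \<Rightarrow> real^('p::finite)) \<Rightarrow> real" where
  "nu_diam N g = Max {(norm (g i - g j))\<^sup>2 | i j. i < N \<and> j < N}"

definition inlier_stable ::
  "nat \<Rightarrow> real \<Rightarrow> (nat \<Rightarrow> real^('p::finite)) \<Rightarrow> nat set \<Rightarrow> nat set \<Rightarrow> real^('p::finite) \<Rightarrow> real^('p::finite)^'p \<Rightarrow> real \<Rightarrow> real \<Rightarrow> bool" where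
  "inlier_stable N eps g Iin Iout mu_g Sigma_g d_mu d_Sigma \<longleftrightarrow>
     Iin \<union> Iout = {..<N} \<and> Iin \<inter> Iout = {} \<and> real (card Iout) \<le> eps * real N \<and>
     symmetric_mat Sigma_g \<and> psd Sigma_g \<and> 0 \<le> d_mu \<and> 0 \<le> d_Sigma \<and>
     (\<forall>w \<in> capped_simplex Iin (eps / (1 - eps)).
        norm (\<Sum>n\<in>Iin. w n *\<^sub>R (g n - mu_g)) \<le> d_mu \<and>
        loewner_le (\<Sum>n\<in>Iin. w n *\<^sub>R outer (g n - mu_g) (g n - mu_g))
                   (Sigma_g + d_Sigma *\<^sub>R mat 1))"

end

theory Submission
  imports Defs
begin


lemma quad_expand: "x \<bullet> (A *v x) = (\<Sum>i\<in>UNIV. \<Sum>j\<in>UNIV. x$i * A$i$j * x$j)"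
  by (simp add: inner_vec_def matrix_vector_mult_def sum_distrib_left mult.assoc)

lemma if10_l[simp]: "(if P then 1 else 0) * (c::real) = (if P then c else 0)" by simp
lemma if10_r[simp]: "(c::real) * (if P then 1 else 0) = (if P then c else 0)" by simp

lemma frob_expand: "frob A B = (\<Sum>i\<in>UNIV. \<Sum>k\<in>UNIV. A$k$i * B$k$i)"
  by (simp add: frob_def trace_def matrix_matrix_mult_def transpose_def)

lemma frob_outer: "frob A (outer r r) = r \<bullet> (A *v r)"
  unfolding frob_expand quad_expand outer_def
  apply simp
  apply (subst sum.swap)
  apply (simp add: mult_ac)
  done

lemma frob_add: "frob A (B + C) = frob A B + frob A C"
  by (simp add: frob_expand algebra_simps sum.distrib)
lemma frob_diff: "frob A (B - C) = frob A B - frob A C"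
  by (simp add: frob_expand algebra_simps sum_subtractf)
lemma frob_scale: "frob A (c *\<^sub>R B) = c * frob A B"
  by (simp add: frob_expand algebra_simps sum_distrib_left)
lemma frob_ladd: "frob (A + B) C = frob A C + frob B C"
  by (simp add: frob_expand algebra_simps sum.distrib)
lemma frob_ldiff: "frob (A - B) C = frob A C - frob B C"
  by (simp add: frob_expand algebra_simps sum_subtractf)
lemma frob_lscale: "frob (c *\<^sub>R A) C = c * frob A C"
  by (simp add: frob_expand algebra_simps sum_distrib_left)
lemma frob_id: "frob (mat 1) C = trace C"
  by (simp add: frob_expand trace_def mat_def)

lemma mv_axis: "\<rho> *v axis i (1::real) = (\<chi> j. \<rho>$j$i)"
  by (simp add: matrix_vector_mult_def axis_def vec_eq_iff)
lemma inner_axis_l: "axis i (1::real) \<bullet> y = y $ i"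
  by (simp add: inner_axis')

lemma quad_shift:
  assumes "symmetric_mat \<rho>"
  shows "(x - t *\<^sub>R axis i 1) \<bullet> (\<rho> *v (x - t *\<^sub>R axis i 1))
     = x \<bullet> (\<rho> *v x) - 2 * t * ((\<chi> j. \<rho>$j$i) \<bullet> x) + t^2 * \<rho>$i$i"
proof -
  have s: "\<And>a b. \<rho>$a$b = \<rho>$b$a" using assms unfolding symmetric_mat_def
    by (metis transpose_def vec_lambda_beta)
  have 1: "(\<rho> *v x) $ i = (\<chi> j. \<rho>$j$i) \<bullet> x"
    by (simp add: matrix_vector_mult_def inner_vec_def s mult.commute)
  have 2: "x \<bullet> (\<chi> j. \<rho>$j$i) = (\<chi> j. \<rho>$j$i) \<bullet> x" by (simp add: inner_commute)
  show ?thesis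
    by (simp add: inner_diff_left inner_diff_right matrix_vector_mult_diff_distrib
         matrix_scaleR_vector_ac[symmetric] mv_axis inner_axis_l 1 2 power2_eq_square algebra_simps flip: scaleR_matrix_vector_assoc)
qed


lemma quad_outer: "x \<bullet> (outer u u *v x) = (u \<bullet> x)^2"
  unfolding quad_expand outer_def
  by (simp add: inner_vec_def power2_eq_square sum_product mult_ac)

lemma sym_entry: "symmetric_mat \<rho> \<Longrightarrow> \<rho>$a$b = \<rho>$b$a"
  unfolding symmetric_mat_def by (metis transpose_def vec_lambda_beta)

lemma psd_frob_aux:
  assumes A: "psd A" and fin: "finite K"
  shows "\<forall>\<rho>. symmetric_mat \<rho> \<and> psd \<rho> \<and> (\<forall>j k. j \<notin> K \<longrightarrow> \<rho>$j$k = 0) \<longrightarrow> 0 \<le> frob A \<rho>"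
  using fin
proof (induction K rule: finite_induct)
  case empty
  then show ?case by (simp add: frob_expand)
next
  case (insert i K)
  show ?case
  proof (intro allI impI, elim conjE)
    fix \<rho> :: "real^'a^'a"
    assume sym: "symmetric_mat \<rho>" and ps: "psd \<rho>" and z: "\<forall>j k. j \<notin> insert i K \<longrightarrow> \<rho>$j$k = 0"
    define r where "r = (\<chi> j. \<rho>$j$i)"
    have sh: "\<And>x t. 0 \<le> x \<bullet> (\<rho> *v x) - 2 * t * (r \<bullet> x) + t^2 * \<rho>$i$i"
      using ps quad_shift[OF sym] unfolding psd_def r_def by metis
    have dii: "0 \<le> \<rho>$i$i" using ps unfolding psd_def
      by (metis inner_axis_l mv_axis vec_lambda_beta)
    show "0 \<le> frob A \<rho>"
    proof (cases "\<rho>$i$i = 0")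
      case True
      have "r \<bullet> x = 0" for x
      proof (rule ccontr)
        assume ne: "r \<bullet> x \<noteq> 0"
        define t where "t = (x \<bullet> (\<rho> *v x) + 1) / (2 * (r \<bullet> x))"
        have "2 * t * (r \<bullet> x) = x \<bullet> (\<rho> *v x) + 1" using ne unfolding t_def by simp
        with sh[of x t] True show False by simp
      qed
      then have "r = 0" by (metis inner_eq_zero_iff)
      then have "\<forall>j k. j \<notin> K \<longrightarrow> \<rho>$j$k = 0"
        using z sym_entry[OF sym] unfolding r_def by (metis insert_iff vec_eq_iff vec_lambda_beta zero_index)
      then show ?thesis using insert.IH sym ps by blast
    next
      case False
      then have pos: "0 < \<rho>$i$i" using dii by simp
      define \<rho>' where "\<rho>' = \<rho> - (1 / \<rho>$i$i) *\<^sub>R outer r r"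
      have sym': "symmetric_mat \<rho>'"
        using sym_entry[OF sym] unfolding symmetric_mat_def \<rho>'_def outer_def transpose_def
        by (simp add: vec_eq_iff mult.commute)
      have psd': "psd \<rho>'"
        unfolding psd_def
      proof
        fix x
        have "x \<bullet> (\<rho>' *v x) = x \<bullet> (\<rho> *v x) - (1 / \<rho>$i$i) * (r \<bullet> x)^2"
          unfolding \<rho>'_def
          by (simp add: matrix_vector_mult_diff_rdistrib inner_diff_right quad_outer
                 flip: scaleR_matrix_vector_assoc)
        also have "\<dots> = x \<bullet> (\<rho> *v x) - 2 * ((r \<bullet> x) / \<rho>$i$i) * (r \<bullet> x) + ((r \<bullet> x) / \<rho>$i$i)^2 * \<rho>$i$i"
          using pos by (simp add: field_simps power2_eq_square)
        finally show "0 \<le> x \<bullet> (\<rho>' *v x)" using sh[of x "(r \<bullet> x) / \<rho>$i$i"] by linarith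
      qed
      have z': "\<forall>j k. j \<notin> K \<longrightarrow> \<rho>'$j$k = 0"
      proof (intro allI impI)
        fix j k assume j: "j \<notin> K"
        show "\<rho>'$j$k = 0"
        proof (cases "j = i")
          case True
          then show ?thesis using pos sym_entry[OF sym, of i k]
            unfolding \<rho>'_def outer_def r_def by simp
        next
          case False
          then show ?thesis using z j unfolding \<rho>'_def outer_def r_def by simp
        qed
      qed
      have "0 \<le> frob A \<rho>'" using insert.IH sym' psd' z' by blast
      moreover have "0 \<le> frob A (outer r r)" using A unfolding frob_outer psd_def by simp
      moreover have "frob A \<rho> = frob A \<rho>' + (1 / \<rho>$i$i) * frob A (outer r r)"
        unfolding \<rho>'_def frob_diff frob_scale by simp
      ultimately show ?thesis using pos by simp
    qed
  qed
qed

lemma psd_frob: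
  assumes "psd A" "symmetric_mat \<rho>" "psd \<rho>"
  shows "0 \<le> frob A \<rho>"
  using psd_frob_aux[OF assms(1), of UNIV] assms by simp


lemma quad_sum: "x \<bullet> ((\<Sum>n\<in>S. f n) *v x) = (\<Sum>n\<in>S. x \<bullet> (f n *v x))"
proof (cases "finite S")
  case True
  then show ?thesis
    by (induction S rule: finite_induct) (simp_all add: matrix_vector_mult_add_rdistrib inner_add_right)
next
  case False
  then show ?thesis by simp
qed

lemma quad_Smat: "x \<bullet> (Smat N g w mu *v x) = (\<Sum>n<N. w n * ((g n - mu) \<bullet> x)^2)"
  unfolding Smat_def quad_sum
  by (simp add: quad_outer flip: scaleR_matrix_vector_assoc)

lemma psd_Smat: "(\<And>n. n < N \<Longrightarrow> 0 \<le> w n) \<Longrightarrow> psd (Smat N g w mu)"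
  unfolding psd_def quad_Smat by (auto intro!: sum_nonneg)

lemma quad_le_opnorm: "x \<bullet> (A *v x) \<le> op_norm A * (norm x)^2"
proof -
  have "x \<bullet> (A *v x) \<le> norm x * norm (A *v x)" by (rule norm_cauchy_schwarz)
  also have "\<dots> \<le> norm x * (op_norm A * norm x)"
    unfolding op_norm_def
    by (rule mult_left_mono[OF onorm[OF matrix_vector_mul_bounded_linear]]) simp
  finally show ?thesis by (simp add: power2_eq_square mult_ac)
qed

lemma frob_le_bound:
  assumes "\<rho> \<in> density_matrices" and B: "\<And>x. x \<bullet> (B *v x) \<le> lam * (norm x)^2"
  shows "frob B \<rho> \<le> lam"
proof -
  have "psd (lam *\<^sub>R mat 1 - B)"
    unfolding psd_def
  proof
    fix x
    have "x \<bullet> ((lam *\<^sub>R mat 1 - B) *v x) = lam * (norm x)^2 - x \<bullet> (B *v x)"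
      by (simp add: matrix_vector_mult_diff_rdistrib inner_diff_right power2_norm_eq_inner
            flip: scaleR_matrix_vector_assoc)
    then show "0 \<le> x \<bullet> ((lam *\<^sub>R mat 1 - B) *v x)" using B[of x] by simp
  qed
  then have "0 \<le> frob (lam *\<^sub>R mat 1 - B) \<rho>"
    using assms(1) psd_frob unfolding density_matrices_def by blast
  then show ?thesis using assms(1) unfolding frob_ldiff frob_lscale frob_id density_matrices_def by simp
qed

lemma if0_l: "(if P then a else 0) * (b::real) = (if P then a * b else 0)" by simp

lemma density_ne: "((1 / real CARD('p)) *\<^sub>R mat 1 :: real^'p^'p) \<in> density_matrices"
  unfolding density_matrices_def symmetric_mat_def psd_def
  apply (intro CollectI conjI allI)
    apply (simp add: transpose_def mat_def vec_eq_iff)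
   apply (simp add: mat_def matrix_vector_mult_def inner_vec_def if0_l)
   apply (rule sum_nonneg) apply (simp add: mult.assoc[symmetric])
  apply (simp add: trace_def mat_def)
  done

lemma OPT_le:
  fixes g :: "nat \<Rightarrow> real^'p"
  assumes u: "u \<in> capped_simplex {..<N} eps"
    and B: "\<And>x. x \<bullet> (Smat N g u mu *v x) \<le> lam * (norm x)^2"
  shows "OPT N eps g mu \<le> lam"
proof -
  define F where "F = (\<lambda>w. Sup ((\<lambda>\<rho>. frob (Smat N g w mu) \<rho>) ` (density_matrices :: (real^'p^'p) set)))"
  have F0: "0 \<le> F w" if w: "w \<in> capped_simplex {..<N} eps" for w
  proof -
    have "psd (Smat N g w mu)" using w unfolding capped_simplex_def by (auto intro!: psd_Smat)
    then have "0 \<le> frob (Smat N g w mu) ((1 / real CARD('p)) *\<^sub>R mat 1)"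
      using density_ne psd_frob unfolding density_matrices_def by blast
    also have "\<dots> \<le> F w" unfolding F_def
      by (rule cSUP_upper[OF density_ne]) (auto intro!: bdd_aboveI2 frob_le_bound quad_le_opnorm)
    finally show ?thesis .
  qed
  have "OPT N eps g mu \<le> F u"
    unfolding OPT_def F_def[symmetric]
    by (rule cInf_lower) (use u F0 in \<open>auto intro!: bdd_belowI2\<close>)
  also have "F u \<le> lam" unfolding F_def
    by (rule cSUP_least) (use density_ne frob_le_bound B in auto)
  finally show ?thesis .
qed


lemma wcs:
  fixes w f :: "'i \<Rightarrow> real"
  assumes "\<And>i. i \<in> I \<Longrightarrow> 0 \<le> w i"
  shows "(\<Sum>i\<in>I. w i * f i)^2 \<le> (\<Sum>i\<in>I. w i) * (\<Sum>i\<in>I. w i * (f i)^2)"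
proof -
  have "(\<Sum>i\<in>I. sqrt (w i) * (sqrt (w i) * f i))^2 \<le> (\<Sum>i\<in>I. (sqrt (w i))^2) * (\<Sum>i\<in>I. (sqrt (w i) * f i)^2)"
    by (rule Cauchy_Schwarz_ineq_sum)
  moreover have "(\<Sum>i\<in>I. sqrt (w i) * (sqrt (w i) * f i)) = (\<Sum>i\<in>I. w i * f i)"
    by (rule sum.cong) (simp_all add: assms mult.assoc[symmetric])
  moreover have "(\<Sum>i\<in>I. (sqrt (w i))^2) = (\<Sum>i\<in>I. w i)"
    by (rule sum.cong) (simp_all add: assms)
  moreover have "(\<Sum>i\<in>I. (sqrt (w i) * f i)^2) = (\<Sum>i\<in>I. w i * (f i)^2)"
    by (rule sum.cong) (simp_all add: assms power_mult_distrib)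
  ultimately show ?thesis by simp
qed

lemma scalar_key:
  fixes y t r G :: real
  assumes y: "0 \<le> y" "y < 1" and r: "0 \<le> r" and rr: "r^2 = y * (G - (1 - y) * t^2)"
  shows "y * t + r \<le> sqrt (y / (1 - y)) * sqrt G"
proof (cases "y = 0")
  case True
  then show ?thesis using rr r by simp
next
  case False
  then have yp: "0 < y" using y by simp
  have G: "0 \<le> G"
  proof -
    have "0 \<le> y * (G - (1 - y) * t^2)" using rr by (metis zero_le_power2)
    then have "0 \<le> G - (1 - y) * t^2" using yp by (simp add: zero_le_mult_iff)
    moreover have "0 \<le> (1 - y) * t^2" using y by simp
    ultimately show ?thesis by linarith
  qed
  have id: "y * G - (1 - y) * (y * t + r)^2 = y * (r - (1 - y) * t)^2"
    using rr by (simp add: algebra_simps power2_eq_square)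
  have "(1 - y) * (y * t + r)^2 \<le> y * G" using id yp
    by (metis diff_ge_0_iff_ge mult_nonneg_nonneg less_imp_le zero_le_power2)
  then have sq: "(y * t + r)^2 \<le> y / (1 - y) * G" using y by (simp add: field_simps)
  have "y * t + r \<le> sqrt ((y * t + r)^2)" by simp
  also have "\<dots> \<le> sqrt (y / (1 - y) * G)" using sq by (rule real_sqrt_le_mono)
  also have "\<dots> = sqrt (y / (1 - y)) * sqrt G" by (rule real_sqrt_mult)
  finally show ?thesis .
qed

lemma sqrt_add_sq_le:
  fixes a b :: real assumes "0 \<le> a" "0 \<le> b"
  shows "sqrt (a + b^2) \<le> sqrt a + b"
proof -
  have "a + b^2 \<le> (sqrt a + b)^2" using assms
    by (simp add: power2_eq_square algebra_simps real_sqrt_mult_self)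
  then have "sqrt (a + b^2) \<le> sqrt ((sqrt a + b)^2)" by (rule real_sqrt_le_mono)
  also have "\<dots> = sqrt a + b" using assms by simp
  finally show ?thesis .
qed



lemma sum_restrict_zero:
  fixes u f :: "nat \<Rightarrow> real"
  assumes "I \<subseteq> {..<N}" "\<And>n. n \<notin> I \<Longrightarrow> u n = 0"
  shows "(\<Sum>n<N. u n * f n) = (\<Sum>n\<in>I. u n * f n)"
  by (rule sum.mono_neutral_right) (use assms in auto)

lemma sum_sq_expand:
  fixes u a :: "nat \<Rightarrow> real"
  shows "(\<Sum>n\<in>I. u n * (a n - b)^2) = (\<Sum>n\<in>I. u n * (a n)^2) - 2 * b * (\<Sum>n\<in>I. u n * a n) + b^2 * (\<Sum>n\<in>I. u n)"
proof -
  have "(\<Sum>n\<in>I. u n * (a n - b)^2) = (\<Sum>n\<in>I. u n * (a n)^2 - 2 * b * (u n * a n) + b^2 * u n)"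
    by (rule sum.cong) (simp_all add: power2_eq_square algebra_simps)
  also have "\<dots> = (\<Sum>n\<in>I. u n * (a n)^2) - 2 * b * (\<Sum>n\<in>I. u n * a n) + b^2 * (\<Sum>n\<in>I. u n)"
    by (simp add: sum.distrib sum_subtractf sum_distrib_left)
  finally show ?thesis .
qed

lemma step_bound:
  fixes N :: nat and eps :: real and g :: "nat \<Rightarrow> real^'p"
    and Iin Iout :: "nat set" and mu_g mu :: "real^'p" and Sigma_g :: "real^'p^'p"
    and d_mu d_Sigma dT :: real and w :: "nat \<Rightarrow> real"
  assumes eps: "0 < eps" "eps < 1/3" and N1: "1 \<le> N"
    and stable: "inlier_stable N eps g Iin Iout mu_g Sigma_g d_mu d_Sigma"
    and wC: "w \<in> capped_simplex {..<N} eps"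
    and dT: "0 \<le> dT"
    and opt: "gamma N g w mu \<le> OPT N eps g mu + dT"
  shows "norm ((\<Sum>n<N. w n *\<^sub>R g n) - mu_g) \<le> sqrt (eps / (1 - 2 * eps)) * norm (mu - mu_g)
     + (1 + sqrt (eps / (1 - 2 * eps))) * d_mu + sqrt (eps / (1 - 2 * eps)) * sqrt (op_norm Sigma_g + d_Sigma + dT)"
proof -
  define al where "al = sqrt (eps / (1 - 2 * eps))"
  define c where "c = mu - mu_g"
  define e where "e = norm c"
  define tau where "tau = op_norm Sigma_g + d_Sigma + dT"
  define G0 where "G0 = op_norm Sigma_g + d_Sigma + 2 * d_mu * e + e^2"
  define G where "G = G0 + dT"
  define y where "y = (\<lambda>n. g n - mu_g)"
  from stable have un: "Iin \<union> Iout = {..<N}" and dis: "Iin \<inter> Iout = {}"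
    and kle: "real (card Iout) \<le> eps * real N" and psdS: "psd Sigma_g"
    and dmu: "0 \<le> d_mu" and dS: "0 \<le> d_Sigma"
    and stab: "\<And>w. w \<in> capped_simplex Iin (eps / (1 - eps)) \<Longrightarrow>
        norm (\<Sum>n\<in>Iin. w n *\<^sub>R (g n - mu_g)) \<le> d_mu \<and>
        loewner_le (\<Sum>n\<in>Iin. w n *\<^sub>R outer (g n - mu_g) (g n - mu_g)) (Sigma_g + d_Sigma *\<^sub>R mat 1)"
    unfolding inlier_stable_def by blast+
  have IinN: "Iin \<subseteq> {..<N}" using un by blast
  have IoutN: "Iout \<subseteq> {..<N}" using un by blast
  have finI: "finite Iin" using IinN finite_subset by blast
  have finO: "finite Iout" using IoutN finite_subset by blast
  define k where "k = real (card Iout)"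
  define m where "m = real (card Iin)"
  have mk: "m + k = real N"
  proof -
    have cN: "card Iin + card Iout = N" using card_Un_disjoint[OF finI finO dis] un by simp
    show ?thesis unfolding m_def k_def using arg_cong[OF cN, of real] by simp
  qed
  have Npos: "0 < real N" using N1 by simp
  have mlow: "(1 - eps) * real N \<le> m" using mk kle unfolding k_def by (simp add: algebra_simps)
  have K0p: "0 < (1 - eps) * real N" using eps Npos by simp
  have mpos: "0 < m" using mlow K0p by linarith
  have k0: "0 \<le> k" unfolding k_def by simp
  have wsum: "(\<Sum>n<N. w n) = 1" and wnn: "\<And>n. n < N \<Longrightarrow> 0 \<le> w n"
    and wub: "\<And>n. n < N \<Longrightarrow> w n \<le> 1 / ((1 - eps) * real N)"
    using wC unfolding capped_simplex_def by auto
  have alnn: "0 \<le> al" unfolding al_def using eps by simp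
  have e0: "0 \<le> e" unfolding e_def by simp
  have opS: "0 \<le> op_norm Sigma_g" unfolding op_norm_def
    by (rule onorm_pos_le[OF matrix_vector_mul_bounded_linear])
  have tau0: "0 \<le> tau" unfolding tau_def using opS dS dT by simp

  define u where "u = (\<lambda>n. if n \<in> Iin then 1 / m else 0)"
  have usumI: "(\<Sum>n\<in>Iin. u n) = 1" unfolding u_def using mpos by (simp add: m_def)
  have uout: "\<And>n. n \<notin> Iin \<Longrightarrow> u n = 0" unfolding u_def by simp
  have usumN: "(\<Sum>n<N. u n) = 1"
    using sum_restrict_zero[OF IinN uout, where f="\<lambda>_. 1"] usumI by simp
  have uC: "u \<in> capped_simplex {..<N} eps"
  proof -
    have "1 / m \<le> 1 / ((1 - eps) * real N)"
      using mlow mpos K0p by (intro divide_left_mono) (auto intro: mult_pos_pos)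
    then show ?thesis unfolding capped_simplex_def using usumN mpos K0p by (auto simp: u_def)
  qed
  have e1: "0 < 1 - eps / (1 - eps)" using eps by (simp add: field_simps)
  have e2: "1 - eps / (1 - eps) \<le> 1" using eps by simp
  have uCI: "u \<in> capped_simplex Iin (eps / (1 - eps))"
  proof -
    have "1 / m \<le> 1 / ((1 - eps / (1 - eps)) * m)"
      using e1 e2 mpos by (intro divide_left_mono) (auto simp: mult_le_cancel_right1)
    then show ?thesis unfolding capped_simplex_def using usumI mpos by (auto simp: u_def m_def)
  qed
  define dU where "dU = (\<Sum>n\<in>Iin. u n *\<^sub>R y n)"
  define MU where "MU = (\<Sum>n\<in>Iin. u n *\<^sub>R outer (y n) (y n))"
  have dUb: "norm dU \<le> d_mu" and MUb: "loewner_le MU (Sigma_g + d_Sigma *\<^sub>R mat 1)"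
    using stab[OF uCI] unfolding dU_def MU_def y_def by auto
  have quadU: "x \<bullet> (Smat N g u mu *v x) \<le> G0 * (norm x)^2" for x
  proof -
    have gy: "\<And>n. (g n - mu) \<bullet> x = y n \<bullet> x - c \<bullet> x"
      unfolding y_def c_def by (simp add: inner_diff_left)
    have "x \<bullet> (Smat N g u mu *v x) = (\<Sum>n\<in>Iin. u n * (y n \<bullet> x - c \<bullet> x)^2)"
      unfolding quad_Smat gy by (rule sum_restrict_zero[OF IinN uout])
    also have "\<dots> = (\<Sum>n\<in>Iin. u n * (y n \<bullet> x)^2) - 2 * (c \<bullet> x) * (\<Sum>n\<in>Iin. u n * (y n \<bullet> x)) + (c \<bullet> x)^2 * 1"
      unfolding sum_sq_expand usumI ..
    also have "(\<Sum>n\<in>Iin. u n * (y n \<bullet> x)^2) = x \<bullet> (MU *v x)"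
      unfolding MU_def quad_sum by (simp add: quad_outer inner_commute flip: scaleR_matrix_vector_assoc)
    also have "(\<Sum>n\<in>Iin. u n * (y n \<bullet> x)) = dU \<bullet> x"
      unfolding dU_def by (simp add: inner_sum_left)
    finally have eq: "x \<bullet> (Smat N g u mu *v x) = x \<bullet> (MU *v x) - 2 * (c \<bullet> x) * (dU \<bullet> x) + (c \<bullet> x)^2" by simp
    have "0 \<le> x \<bullet> ((Sigma_g + d_Sigma *\<^sub>R mat 1 - MU) *v x)"
      using MUb unfolding loewner_le_def psd_def by blast
    then have m1: "x \<bullet> (MU *v x) \<le> x \<bullet> (Sigma_g *v x) + d_Sigma * (norm x)^2"
      by (simp add: matrix_vector_mult_diff_rdistrib matrix_vector_mult_add_rdistrib inner_diff_right
            inner_add_right power2_norm_eq_inner flip: scaleR_matrix_vector_assoc)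
    have m2: "x \<bullet> (Sigma_g *v x) \<le> op_norm Sigma_g * (norm x)^2" by (rule quad_le_opnorm)
    have cx: "\<bar>c \<bullet> x\<bar> \<le> e * norm x" unfolding e_def by (rule Cauchy_Schwarz_ineq2)
    have dx: "\<bar>dU \<bullet> x\<bar> \<le> d_mu * norm x"
      using Cauchy_Schwarz_ineq2[of dU x] dUb by (meson mult_right_mono norm_ge_zero order_trans)
    have m3: "- (2 * (c \<bullet> x) * (dU \<bullet> x)) \<le> 2 * (e * norm x) * (d_mu * norm x)"
    proof -
      have "\<bar>(c \<bullet> x) * (dU \<bullet> x)\<bar> \<le> (e * norm x) * (d_mu * norm x)"
        unfolding abs_mult by (rule mult_mono[OF cx dx]) (auto simp: e0)
      then show ?thesis by linarith
    qed
    have m4: "(c \<bullet> x)^2 \<le> (e * norm x)^2"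
      using cx by (metis abs_ge_zero power2_abs power_mono)
    show ?thesis unfolding eq G0_def using m1 m2 m3 m4
      by (simp add: algebra_simps power2_eq_square)
  qed
  have OPTb: "OPT N eps g mu \<le> G0" by (rule OPT_le[OF uC quadU])
  have gamb: "gamma N g w mu \<le> G" using opt OPTb unfolding G_def by simp
  define dn where "dn = (\<Sum>n<N. w n *\<^sub>R g n) - mu_g"
  have dn_eq: "dn = (\<Sum>n<N. w n *\<^sub>R y n)"
  proof -
    have "(\<Sum>n<N. w n *\<^sub>R y n) = (\<Sum>n<N. w n *\<^sub>R g n) - (\<Sum>n<N. w n) *\<^sub>R mu_g"
      unfolding y_def by (simp add: scaleR_diff_right sum_subtractf scaleR_sum_left)
    then show ?thesis unfolding dn_def wsum by simp
  qed
  have RHS0: "0 \<le> al * e + (1 + al) * d_mu + al * sqrt tau"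
    using alnn e0 dmu tau0 by simp
  have main: "norm dn \<le> al * e + (1 + al) * d_mu + al * sqrt tau"
  proof (cases "dn = 0")
    case True
    then show ?thesis using RHS0 by simp
  next
    case False
    define v where "v = (1 / norm dn) *\<^sub>R dn"
    have nv: "norm v = 1" unfolding v_def using False by simp
    have vdn: "v \<bullet> dn = norm dn" unfolding v_def using False
      by (simp add: power2_norm_eq_inner[symmetric] power2_eq_square)
    define a where "a = (\<lambda>n. y n \<bullet> v)"
    define b where "b = c \<bullet> v"
    have ab: "\<And>n. (g n - mu) \<bullet> v = a n - b"
      unfolding a_def b_def y_def c_def by (simp add: inner_diff_left)
    have V: "(\<Sum>n<N. w n * (a n - b)^2) \<le> G"
    proof -
      have "(\<Sum>n<N. w n * (a n - b)^2) = v \<bullet> (Smat N g w mu *v v)"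
        unfolding quad_Smat ab ..
      also have "\<dots> \<le> op_norm (Smat N g w mu) * (norm v)^2" by (rule quad_le_opnorm)
      also have "\<dots> = gamma N g w mu" using nv unfolding gamma_def by simp
      finally show ?thesis using gamb by simp
    qed
    have ndn: "norm dn = (\<Sum>n<N. w n * a n)"
    proof -
      have "norm dn = v \<bullet> dn" using vdn by simp
      also have "\<dots> = (\<Sum>n<N. w n * a n)" unfolding dn_eq a_def by (simp add: inner_sum_right inner_commute)
      finally show ?thesis .
    qed
    have split: "\<And>f. (\<Sum>n<N. f n) = (\<Sum>n\<in>Iin. f n) + (\<Sum>n\<in>Iout. (f n :: real))"
      using sum.union_disjoint[OF finI finO dis] un by simp
    define Wi where "Wi = (\<Sum>n\<in>Iin. w n)"
    define Wo where "Wo = (\<Sum>n\<in>Iout. w n)"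
    have WiWo: "Wi + Wo = 1" using split[of w] wsum unfolding Wi_def Wo_def by simp
    have wnnI: "\<And>n. n \<in> Iin \<Longrightarrow> 0 \<le> w n" and wnnO: "\<And>n. n \<in> Iout \<Longrightarrow> 0 \<le> w n"
      using wnn un by auto
    have Wo0: "0 \<le> Wo" unfolding Wo_def using wnnO by (simp add: sum_nonneg)
    define K0 where "K0 = (1 - eps) * real N"
    have K0pos: "0 < K0" unfolding K0_def using eps Npos by simp
    have Wok: "Wo \<le> k / K0"
    proof -
      have "Wo \<le> real (card Iout) * (1 / K0)" unfolding Wo_def K0_def
        by (rule sum_bounded_above) (use wub un in auto)
      then show ?thesis unfolding k_def by simp
    qed
    have kK: "k / K0 \<le> eps / (1 - eps)"
    proof -
      have "k / K0 \<le> (eps * real N) / K0" using kle K0pos unfolding k_def by (simp add: divide_right_mono)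
      also have "\<dots> = eps / (1 - eps)" unfolding K0_def using Npos eps by (simp add: field_simps)
      finally show ?thesis .
    qed
    define x where "x = eps / (1 - eps)"
    have Wox: "Wo \<le> x" using Wok kK unfolding x_def by simp
    have x1: "x < 1/2" unfolding x_def using eps by (simp add: field_simps)
    have Wipos: "0 < Wi" using WiWo Wox x1 by simp
    have K0k: "0 < K0 - k"
    proof -
      have "K0 - k \<ge> (1 - 2 * eps) * real N" unfolding K0_def using kle k_def by (simp add: algebra_simps)
      moreover have "0 < (1 - 2 * eps) * real N" using eps Npos by simp
      ultimately show ?thesis by simp
    qed
    have Wilow: "(K0 - k) / K0 \<le> Wi"
    proof -
      have "(K0 - k) / K0 = 1 - k / K0" using K0pos by (simp add: diff_divide_distrib)
      then show ?thesis using WiWo Wok by linarith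
    qed
    define w' where "w' = (\<lambda>n. w n / Wi)"
    have w'C: "w' \<in> capped_simplex Iin (eps / (1 - eps))"
    proof -
      have s1: "(\<Sum>n\<in>Iin. w' n) = 1" unfolding w'_def using Wipos
        by (simp add: sum_divide_distrib[symmetric] Wi_def)
      have ineq: "(1 - eps / (1 - eps)) * m \<le> K0 - k"
      proof -
        have "(1 - eps / (1 - eps)) * m = (1 - 2 * eps) / (1 - eps) * (real N - k)"
        proof -
          have mE: "m = real N - k" using mk by simp
          have "1 - eps / (1 - eps) = (1 - 2 * eps) / (1 - eps)" using eps by (simp add: field_simps)
          then show ?thesis unfolding mE by simp
        qed
        moreover have "(1 - 2 * eps) * (real N - k) \<le> (1 - eps) * (K0 - k)"
        proof -
          have "(1 - eps) * (K0 - k) - (1 - 2 * eps) * (real N - k) = eps * (eps * real N - k)"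
            unfolding K0_def by (simp add: algebra_simps power2_eq_square)
          moreover have "0 \<le> eps * (eps * real N - k)" using eps kle k_def by simp
          ultimately show ?thesis by simp
        qed
        ultimately show ?thesis using eps by (simp add: field_simps)
      qed
      have b1: "w' n \<le> 1 / ((1 - eps / (1 - eps)) * m)" if n: "n \<in> Iin" for n
      proof -
        have "w n \<le> 1 / K0" using wub[of n] n IinN unfolding K0_def by auto
        then have "w' n \<le> (1 / K0) / Wi" unfolding w'_def using Wipos by (intro divide_right_mono) auto
        also have "\<dots> \<le> (1 / K0) / ((K0 - k) / K0)"
          using Wilow K0pos K0k Wipos by (intro divide_left_mono) (auto intro!: mult_pos_pos divide_pos_pos)
        also have "\<dots> = 1 / (K0 - k)" using K0pos by simp
        also have "\<dots> \<le> 1 / ((1 - eps / (1 - eps)) * m)"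
          using ineq e1 mpos K0k by (intro divide_left_mono) (auto intro!: mult_pos_pos)
        finally show ?thesis .
      qed
      show ?thesis unfolding capped_simplex_def using s1 b1 wnnI Wipos
        by (auto simp: w'_def m_def)
    qed
    define A where "A = (\<Sum>n\<in>Iin. w' n * a n)"
    have Ab: "A \<le> d_mu"
    proof -
      have "A = (\<Sum>n\<in>Iin. w' n *\<^sub>R y n) \<bullet> v" unfolding A_def a_def by (simp add: inner_sum_left)
      also have "\<dots> \<le> norm (\<Sum>n\<in>Iin. w' n *\<^sub>R y n) * norm v" by (rule norm_cauchy_schwarz)
      also have "\<dots> \<le> d_mu" using stab[OF w'C] nv unfolding y_def by simp
      finally show ?thesis .
    qed
    have P: "(\<Sum>n\<in>Iin. w n * a n) = Wi * A"
      unfolding A_def w'_def sum_distrib_left using Wipos by (intro sum.cong) auto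
    define Vi where "Vi = (\<Sum>n\<in>Iin. w n * (a n - b)^2)"
    define Vo where "Vo = (\<Sum>n\<in>Iout. w n * (a n - b)^2)"
    define Q where "Q = (\<Sum>n\<in>Iout. w n * (a n - b))"
    have ViVo: "Vi + Vo \<le> G" using V split[of "\<lambda>n. w n * (a n - b)^2"] unfolding Vi_def Vo_def by simp
    have Vo0: "0 \<le> Vo" unfolding Vo_def using wnnO by (simp add: sum_nonneg)
    have csI: "(\<Sum>n\<in>Iin. w n * (a n - b))^2 \<le> Wi * Vi"
      unfolding Wi_def Vi_def by (rule wcs) (use wnnI in auto)
    have sI: "(\<Sum>n\<in>Iin. w n * (a n - b)) = Wi * (A - b)"
      using P unfolding Wi_def by (simp add: algebra_simps sum_subtractf sum_distrib_right sum_distrib_left)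
    have ViA: "Wi * (A - b)^2 \<le> Vi"
    proof -
      have "Wi * (Wi * (A - b)^2) \<le> Wi * Vi" using csI sI by (simp add: power_mult_distrib power2_eq_square mult_ac)
      then show ?thesis using Wipos by simp
    qed
    have csO: "Q^2 \<le> Wo * Vo" unfolding Q_def Wo_def Vo_def by (rule wcs) (use wnnO in auto)
    have sO: "(\<Sum>n\<in>Iout. w n * a n) = Q + Wo * b"
      unfolding Q_def Wo_def by (simp add: algebra_simps sum_subtractf sum_distrib_right sum_distrib_left)
    define t where "t = b - A"
    have tot: "norm dn = A + Wo * t + Q"
    proof -
      have WiE: "Wi = 1 - Wo" using WiWo by simp
      show ?thesis using ndn split[of "\<lambda>n. w n * a n"] P sO unfolding t_def WiE
        by (simp add: algebra_simps)
    qed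
    have y1: "Wo < 1" using Wox x1 by simp
    have Gt: "Vo \<le> G - (1 - Wo) * t^2"
    proof -
      have WiE: "Wi = 1 - Wo" using WiWo by simp
      have "Vo \<le> G - Wi * (A - b)^2" using ViVo ViA by linarith
      moreover have "(A - b)^2 = t^2" unfolding t_def by (simp add: power2_commute)
      ultimately show ?thesis unfolding WiE by simp
    qed
    define r where "r = sqrt (Wo * (G - (1 - Wo) * t^2))"
    have Gt0: "0 \<le> G - (1 - Wo) * t^2" using Gt Vo0 by simp
    have r0: "0 \<le> r" unfolding r_def using Wo0 Gt0 by simp
    have rr: "r^2 = Wo * (G - (1 - Wo) * t^2)" unfolding r_def using Wo0 Gt0 by simp
    have Qr: "Q \<le> r"
    proof -
      have "Q \<le> sqrt (Q^2)" by simp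
      also have "\<dots> \<le> sqrt (Wo * Vo)" using csO by (rule real_sqrt_le_mono)
      also have "\<dots> \<le> r" unfolding r_def using Gt Wo0 by (intro real_sqrt_le_mono mult_left_mono) auto
      finally show ?thesis .
    qed
    have key: "Wo * t + r \<le> sqrt (Wo / (1 - Wo)) * sqrt G"
      by (rule scalar_key[OF Wo0 y1 r0 rr])
    have ratio: "Wo / (1 - Wo) \<le> eps / (1 - 2 * eps)"
    proof -
      have "Wo / (1 - Wo) \<le> x / (1 - x)" using Wox Wo0 x1 y1 by (simp add: field_simps)
      also have "x / (1 - x) = eps / (1 - 2 * eps)"
      proof -
        have n1: "1 - eps \<noteq> 0" "1 - 2 * eps \<noteq> 0" using eps by auto
        have h1: "1 - x = (1 - 2 * eps) / (1 - eps)" unfolding x_def using n1 by (simp add: field_simps)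
        show ?thesis unfolding h1 unfolding x_def using n1 by simp
      qed
      finally show ?thesis .
    qed
    have sr: "sqrt (Wo / (1 - Wo)) \<le> al" unfolding al_def using ratio by (rule real_sqrt_le_mono)
    have G_le: "sqrt G \<le> sqrt tau + (e + d_mu)"
    proof -
      have "G \<le> tau + (e + d_mu)^2" unfolding G_def G0_def tau_def using dmu
        by (simp add: power2_eq_square algebra_simps)
      then have "sqrt G \<le> sqrt (tau + (e + d_mu)^2)" by (rule real_sqrt_le_mono)
      also have "\<dots> \<le> sqrt tau + (e + d_mu)" using tau0 e0 dmu by (intro sqrt_add_sq_le) auto
      finally show ?thesis .
    qed
    have "sqrt (Wo / (1 - Wo)) * sqrt G \<le> al * (sqrt tau + (e + d_mu))"
    proof -
      have "0 \<le> (1 - Wo) * t^2" using y1 by simp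
      then have "0 \<le> G" using Gt0 by linarith
      then show ?thesis using sr G_le alnn by (intro mult_mono) auto
    qed
    then show ?thesis using tot key Qr Ab by (simp add: algebra_simps)
  qed
  then show ?thesis unfolding dn_def al_def e_def c_def tau_def by (simp add: algebra_simps)
qed



theorem mainTheorem11:
  fixes N :: nat and eps :: real and g :: "nat \<Rightarrow> real^'p" and T :: nat
    and Iin Iout :: "nat set" and mu_g :: "real^'p" and Sigma_g :: "real^'p^'p"
    and d_mu d_Sigma :: real
    and mu :: "nat \<Rightarrow> real^'p" and wbar :: "nat \<Rightarrow> nat \<Rightarrow> real"
  defines "delta_T \<equiv> 4 * nu_diam N g * (sqrt (ln (1 / (1 - eps)) / real T) + sqrt (ln (real CARD('p)) / real T))"
      and "alpha \<equiv> sqrt (eps / (1 - 2 * eps))"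
      and "e \<equiv> (\<lambda>s. norm (mu s - mu_g))"
      and "R \<equiv> (1 + sqrt (eps / (1 - 2 * eps))) * d_mu + sqrt (eps / (1 - 2 * eps)) * sqrt (op_norm Sigma_g + d_Sigma + 4 * nu_diam N g * (sqrt (ln (1 / (1 - eps)) / real T) + sqrt (ln (real CARD('p)) / real T)))"
  assumes N_pos: "1 \<le> N"
      and eps: "0 < eps" "eps < 1/3"
      and p2: "2 \<le> CARD('p)"
      and nu_pos: "0 < nu_diam N g"
      and T_large: "real T \<ge> 4 * max (ln (1 / (1 - eps))) (ln (real CARD('p)))"
      and stable: "inlier_stable N eps g Iin Iout mu_g Sigma_g d_mu d_Sigma"
      and mu1: "mu 1 \<in> convex hull (g ` {..<N})"
      and w_feas: "\<And>s. 1 \<le> s \<Longrightarrow> wbar s \<in> capped_simplex {..<N} eps"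
      and w_opt: "\<And>s. 1 \<le> s \<Longrightarrow> gamma N g (wbar s) (mu s) \<le> OPT N eps g (mu s) + delta_T"
      and mu_next: "\<And>s. 1 \<le> s \<Longrightarrow> mu (s + 1) = (\<Sum>n<N. wbar s n *\<^sub>R g n)"
  shows "(\<forall>s\<ge>1. e (s + 1) \<le> alpha * e s + R)
       \<and> (\<forall>s\<ge>1. e s \<le> alpha ^ (s - 1) * e 1 + (1 - alpha ^ (s - 1)) / (1 - alpha) * R)
       \<and> limsup (\<lambda>s. ereal (e s)) \<le> ereal (R / (1 - alpha))"
proof -
  have l1: "0 \<le> ln (1 / (1 - eps))" using eps by simp
  have l2: "0 \<le> ln (real CARD('p))" using p2 by simp
  have dT0: "0 \<le> delta_T" unfolding delta_T_def using nu_pos l1 l2 by simp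
  have dmu: "0 \<le> d_mu" and dS: "0 \<le> d_Sigma" using stable unfolding inlier_stable_def by auto
  have opS: "0 \<le> op_norm Sigma_g" unfolding op_norm_def
    by (rule onorm_pos_le[OF matrix_vector_mul_bounded_linear])
  have al0: "0 \<le> alpha" unfolding alpha_def using eps by simp
  have al1: "alpha < 1"
  proof -
    have "eps / (1 - 2 * eps) < 1" using eps by (simp add: field_simps)
    then show ?thesis unfolding alpha_def by simp
  qed
  have R0: "0 \<le> R" unfolding R_def using dmu dS opS dT0[unfolded delta_T_def] eps by simp
  have step: "\<forall>s\<ge>1. e (s + 1) \<le> alpha * e s + R"
  proof (intro allI impI)
    fix s :: nat assume s: "1 \<le> s"
    have "norm ((\<Sum>n<N. wbar s n *\<^sub>R g n) - mu_g) \<le> sqrt (eps / (1 - 2 * eps)) * norm (mu s - mu_g)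
     + (1 + sqrt (eps / (1 - 2 * eps))) * d_mu + sqrt (eps / (1 - 2 * eps)) * sqrt (op_norm Sigma_g + d_Sigma + delta_T)"
      by (rule step_bound[OF eps N_pos stable w_feas[OF s] dT0 w_opt[OF s]])
    then show "e (s + 1) \<le> alpha * e s + R"
      unfolding e_def alpha_def R_def mu_next[OF s] delta_T_def by simp
  qed
  have iter: "e (Suc n) \<le> alpha ^ n * e 1 + (1 - alpha ^ n) / (1 - alpha) * R" for n
  proof (induction n)
    case 0
    then show ?case by simp
  next
    case (Suc n)
    have "e (Suc (Suc n)) \<le> alpha * e (Suc n) + R" using step by (metis Suc_eq_plus1 le_add2 plus_1_eq_Suc)
    also have "\<dots> \<le> alpha * (alpha ^ n * e 1 + (1 - alpha ^ n) / (1 - alpha) * R) + R"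
      using Suc.IH al0 by (simp add: mult_left_mono)
    also have "\<dots> = alpha ^ Suc n * e 1 + (1 - alpha ^ Suc n) / (1 - alpha) * R"
      using al1 by (simp add: field_simps)
    finally show ?case .
  qed
  have iter2: "\<forall>s\<ge>1. e s \<le> alpha ^ (s - 1) * e 1 + (1 - alpha ^ (s - 1)) / (1 - alpha) * R"
  proof (intro allI impI)
    fix s :: nat assume "1 \<le> s"
    then obtain n where "s = Suc n" using not0_implies_Suc by fastforce
    then show "e s \<le> alpha ^ (s - 1) * e 1 + (1 - alpha ^ (s - 1)) / (1 - alpha) * R" using iter by simp
  qed
  define b where "b = (\<lambda>s. alpha ^ (s - 1) * e 1 + R / (1 - alpha))"
  have ev: "\<forall>\<^sub>F s in sequentially. ereal (e s) \<le> ereal (b s)"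
  proof (rule eventually_sequentiallyI[of 1])
    fix s :: nat assume s: "1 \<le> s"
    have "(1 - alpha ^ (s - 1)) / (1 - alpha) * R \<le> R / (1 - alpha)"
    proof -
      have "(1 - alpha ^ (s - 1)) * R \<le> R" using al0 R0 by (simp add: algebra_simps)
      then show ?thesis using al1 by (simp add: divide_right_mono)
    qed
    then show "ereal (e s) \<le> ereal (b s)" using iter2 s unfolding b_def by force
  qed
  have lim0: "(\<lambda>s. alpha ^ (s - 1)) \<longlonglongrightarrow> 0"
  proof (rule LIMSEQ_offset[where k=1])
    show "(\<lambda>n. alpha ^ (n + 1 - 1)) \<longlonglongrightarrow> 0" using LIMSEQ_power_zero[of alpha] al0 al1 by simp
  qed
  have limb: "b \<longlonglongrightarrow> R / (1 - alpha)"
    unfolding b_def using tendsto_add[OF tendsto_mult_left_zero[OF lim0, of "e 1"] tendsto_const[of "R / (1 - alpha)"]]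
    by (simp add: mult.commute)
  have "limsup (\<lambda>s. ereal (e s)) \<le> limsup (\<lambda>s. ereal (b s))" by (rule Limsup_mono[OF ev])
  also have "\<dots> = ereal (R / (1 - alpha))"
    by (rule lim_imp_Limsup) (simp_all add: limb)
  finally show ?thesis using step iter2 by blast
qed

end
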